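(* Let $W=W(v_0;v_1,\dots,v_k)$ be a $k$-wheel and let $d:[1,k]\to\{1,2\}$ be a nonconstant function. Then there are exactly two coupled trees $T$ of $W$ such that $\operatorname{val}_T(v_i)=d(i)$ for all $i\in[1,k]$. (Consequently $W$ has exactly $2^{k+1}-4$ coupled trees.)
   Context: For $k\ge 3$ and distinct vertices $v_0,\dots,v_k$, the $k$-wheel $W=W(v_0;v_1,\dots,v_k)$ is the graph whose edges are the radii $v_0v_i$ ($1\le i\le k$) and the chords $v_iv_{i+1}$ ($1\le i\le k$), with $v_{k+1}=v_1$. A coupled tree of $W$ is a spanning tree $T\subseteq E(W)$ of $V(W)$ such that $E(W)\setminus T$ is also a spanning tree of $V(W)$. $\operatorname{val}_T(v)$ is the number of edges of $T$ incident to $v$. *)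

theory Defs
  imports Main
begin

text \<open>Simple undirected graphs: an edge is a two-element set of vertices.\<close>

definition wheel_vertices :: "(nat \<Rightarrow> 'a) \<Rightarrow> nat \<Rightarrow> 'a set" where
  "wheel_vertices v k = v ` {0..k}"

definition wheel_edges :: "(nat \<Rightarrow> 'a) \<Rightarrow> nat \<Rightarrow> 'a set set" where
  "wheel_edges v k =
     {{v 0, v i} | i. 1 \<le> i \<and> i \<le> k} \<union>
     {{v i, v (if i = k then 1 else i + 1)} | i. 1 \<le> i \<and> i \<le> k}"

definition adj :: "'a set set \<Rightarrow> 'a \<Rightarrow> 'a \<Rightarrow> bool" where
  "adj T x y \<longleftrightarrow> x \<noteq> y \<and> {x, y} \<in> T"

definition connected_on :: "'a set \<Rightarrow> 'a set set \<Rightarrow> bool" where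
  "connected_on V T \<longleftrightarrow> (\<forall>x\<in>V. \<forall>y\<in>V. (adj T)\<^sup>*\<^sup>* x y)"

definition has_cycle :: "'a set set \<Rightarrow> bool" where
  "has_cycle T \<longleftrightarrow> (\<exists>xs. length xs \<ge> 3 \<and> distinct xs \<and>
      (\<forall>i < length xs. {xs ! i, xs ! ((i + 1) mod length xs)} \<in> T))"

definition spanning_tree :: "'a set \<Rightarrow> 'a set set \<Rightarrow> bool" where
  "spanning_tree V T \<longleftrightarrow>
     T \<subseteq> {{x, y} | x y. x \<in> V \<and> y \<in> V \<and> x \<noteq> y} \<and>
     connected_on V T \<and> \<not> has_cycle T"

definition coupled_tree :: "'a set \<Rightarrow> 'a set set \<Rightarrow> 'a set set \<Rightarrow> bool" where
  "coupled_tree V E T \<longleftrightarrow> T \<subseteq> E \<and> spanning_tree V T \<and> spanning_tree V (E - T)"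

definition val :: "'a set set \<Rightarrow> 'a \<Rightarrow> nat" where
  "val T x = card {e \<in> T. x \<in> e}"

end

theory Submission
  imports Defs
begin
lemma adj_sym: "adj T x y \<Longrightarrow> adj T y x" by (auto simp: adj_def insert_commute)

lemma rtranclp_adj_sym: "(adj T)\<^sup>*\<^sup>* x y \<Longrightarrow> (adj T)\<^sup>*\<^sup>* y x"
proof (induction rule: rtranclp_induct)
  case base then show ?case by simp
next
  case (step y z)
  then show ?case using adj_sym converse_rtranclp_into_rtranclp by metis
qed

lemma card3: assumes "a \<noteq> b" "a \<noteq> c" "b \<noteq> c"
  shows "card ((if P then {a} else {}) \<union> (if Q then {b} else {}) \<union> (if R then {c} else {})) =
    (if P then 1 else 0) + (if Q then 1 else 0) + (if R then 1 else (0::nat))"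
  using assms by (cases P; cases Q; cases R) (simp_all add: insert_commute)

lemma tree_by_parent:
  fixes f :: "'a \<Rightarrow> nat"
  assumes sub: "T \<subseteq> {{x, y} | x y. x \<in> V \<and> y \<in> V \<and> x \<noteq> y}" and r: "r \<in> V"
  and par: "\<And>u. u \<in> V \<Longrightarrow> u \<noteq> r \<Longrightarrow> par u \<in> V \<and> {u, par u} \<in> T \<and> f (par u) < f u"
  and edges: "\<And>e. e \<in> T \<Longrightarrow> \<exists>u\<in>V. u \<noteq> r \<and> e = {u, par u}"
  shows "spanning_tree V T"
proof -
  have reach: "(adj T)\<^sup>*\<^sup>* u r" if "u \<in> V" for u
    using that
  proof (induction "f u" arbitrary: u rule: less_induct)
    case less
    show ?case
    proof (cases "u = r")
      case True then show ?thesis by simp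
    next
      case False
      with par[OF less.prems] have h: "par u \<in> V" "{u, par u} \<in> T" "f (par u) < f u" by auto
      then have "par u \<noteq> u" by auto
      with h have "adj T u (par u)" by (auto simp: adj_def)
      moreover have "(adj T)\<^sup>*\<^sup>* (par u) r" using less.hyps[OF h(3) h(1)] .
      ultimately show ?thesis by (rule converse_rtranclp_into_rtranclp)
    qed
  qed
  have conn: "connected_on V T"
    unfolding connected_on_def
  proof (intro ballI)
    fix x y assume "x \<in> V" "y \<in> V"
    then show "(adj T)\<^sup>*\<^sup>* x y" using reach rtranclp_adj_sym rtranclp_trans by metis
  qed
  have nocyc: "\<not> has_cycle T"
  proof
    assume "has_cycle T"
    then obtain xs where len: "length xs \<ge> 3" and dist: "distinct xs"
      and cyc: "\<forall>i<length xs. {xs ! i, xs ! ((i + 1) mod length xs)} \<in> T"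
      unfolding has_cycle_def by blast
    define n where "n = length xs"
    have fin: "finite (f ` set xs)" "f ` set xs \<noteq> {}" using len by auto
    then have "Max (f ` set xs) \<in> f ` set xs" by (rule Max_in)
    then obtain x where x: "x \<in> set xs" "f x = Max (f ` set xs)" by auto
    then obtain i where i: "i < n" "xs ! i = x" unfolding n_def by (auto simp: in_set_conv_nth)
    have imax: "f (xs ! j) \<le> f (xs ! i)" if "j < n" for j
      using Max_ge[OF fin(1)] that i x unfolding n_def by auto
    have key: "b = par a" if ab: "{a, b} \<in> T" "f b \<le> f a" for a b
    proof -
      obtain u where u: "u \<in> V" "u \<noteq> r" "{a,b} = {u, par u}" using edges[OF ab(1)] by blast
      have lt: "f (par u) < f u" using par[OF u(1,2)] by blast
      from u(3) have "(a = u \<and> b = par u) \<or> (a = par u \<and> b = u)" by (auto simp: doubleton_eq_iff)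
      then show ?thesis using lt ab(2) by auto
    qed
    have n3: "n \<ge> 3" using len n_def by simp
    define j where "j = (i + n - 1) mod n"
    have j: "j < n" using n3 j_def by simp
    have "(j + 1) mod n = (i + n - 1 + 1) mod n" unfolding j_def by (metis mod_add_left_eq)
    also have "i + n - 1 + 1 = i + n" using n3 by simp
    finally have ji: "(j + 1) mod n = i" using i by simp
    have e1: "{xs ! i, xs ! ((i+1) mod n)} \<in> T" using cyc i n_def by auto
    have e2: "{xs ! j, xs ! i} \<in> T" using cyc j ji n_def by auto
    then have e2': "{xs ! i, xs ! j} \<in> T" by (simp add: insert_commute)
    have "xs ! ((i+1) mod n) = par (xs ! i)" using key[OF e1] imax n3 by simp
    moreover have "xs ! j = par (xs ! i)" using key[OF e2'] imax j by simp
    ultimately have "xs ! ((i+1) mod n) = xs ! j" by simp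
    moreover have "(i+1) mod n < length xs" "j < length xs" using j n3 n_def by (metis mod_less_divisor not_numeral_le_zero le0 neq0_conv le_zero_eq, simp)
    ultimately have "(i+1) mod n = j" using nth_eq_iff_index_eq[OF dist] by blast
    then have "((i+1) mod n + 1) mod n = i" using ji by simp
    then have m: "(i + 2) mod n = i" by (metis mod_add_left_eq add.assoc one_add_one)
    show False
    proof (cases "i + 2 < n")
      case True then show False using m by simp
    next
      case False
      then have "(i + 2) mod n = (i + 2 - n) mod n" by (simp add: le_mod_geq)
      also have "i + 2 - n < n" using i n3 by simp
      then have "(i + 2 - n) mod n = i + 2 - n" by simp
      finally have "(i + 2) mod n = i + 2 - n" .
      then show False using m n3 i by simp
    qed
  qed
  show ?thesis unfolding spanning_tree_def using sub conn nocyc by blast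
qed

locale wheel =
  fixes v :: "nat \<Rightarrow> 'a" and k :: nat
  assumes k3: "3 \<le> k" and vinj: "inj_on v {0..k}"
begin

definition nx :: "nat \<Rightarrow> nat" where "nx i = (if i = k then 1 else i + 1)"
definition pv :: "nat \<Rightarrow> nat" where "pv i = (if i = 1 then k else i - 1)"
definition rad where "rad i = {v 0, v i}"
definition ch where "ch i = {v i, v (nx i)}"
definition mkT where "mkT X C = rad ` X \<union> ch ` C"
definition TA where "TA C = mkT {i\<in>{1..k}. pv i \<notin> C} C"
definition TB where "TB C = mkT {i\<in>{1..k}. i \<notin> C} C"
definition wr where "wr j t = (j - 1 + t) mod k + 1"

lemma veq: "a \<le> k \<Longrightarrow> b \<le> k \<Longrightarrow> v a = v b \<longleftrightarrow> a = b"
  using vinj by (auto simp: inj_on_def)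

lemma nx_range: "i \<in> {1..k} \<Longrightarrow> nx i \<in> {1..k}" using k3 by (auto simp: nx_def)
lemma pv_range: "i \<in> {1..k} \<Longrightarrow> pv i \<in> {1..k}" using k3 by (auto simp: pv_def)
lemma pv_nx: "i \<in> {1..k} \<Longrightarrow> pv (nx i) = i" using k3 by (auto simp: nx_def pv_def)
lemma nx_pv: "i \<in> {1..k} \<Longrightarrow> nx (pv i) = i" using k3 by (auto simp: nx_def pv_def)
lemma nx_neq: "i \<in> {1..k} \<Longrightarrow> nx i \<noteq> i" using k3 by (auto simp: nx_def)
lemma pv_neq: "i \<in> {1..k} \<Longrightarrow> pv i \<noteq> i" using k3 by (auto simp: pv_def)
lemma nxnx: "i \<in> {1..k} \<Longrightarrow> nx (nx i) \<noteq> i" using k3 by (auto simp: nx_def)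

lemma v0_ne: "i \<in> {1..k} \<Longrightarrow> v i \<noteq> v 0" using veq[of i 0] by auto
lemma vi_eq: "i \<in> {1..k} \<Longrightarrow> j \<in> {1..k} \<Longrightarrow> v i = v j \<longleftrightarrow> i = j" using veq[of i j] by auto

lemma rad_inj: "i \<in> {1..k} \<Longrightarrow> j \<in> {1..k} \<Longrightarrow> rad i = rad j \<longleftrightarrow> i = j"
proof
  assume a: "i \<in> {1..k}" "j \<in> {1..k}" "rad i = rad j"
  then have "v i = v 0 \<or> v i = v j" unfolding rad_def by (metis insertCI insertE singletonD)
  then show "i = j" using v0_ne[OF a(1)] vi_eq[OF a(1,2)] by blast
qed simp

lemma rad_ne_ch: "i \<in> {1..k} \<Longrightarrow> j \<in> {1..k} \<Longrightarrow> rad i \<noteq> ch j"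
proof
  assume a: "i \<in> {1..k}" "j \<in> {1..k}" "rad i = ch j"
  then have "v 0 \<in> ch j" unfolding rad_def by (metis insertI1)
  then have "v 0 = v j \<or> v 0 = v (nx j)" unfolding ch_def by blast
  then show False using v0_ne[OF a(2)] v0_ne[OF nx_range[OF a(2)]] by metis
qed

lemma ch_inj: "i \<in> {1..k} \<Longrightarrow> j \<in> {1..k} \<Longrightarrow> ch i = ch j \<longleftrightarrow> i = j"
proof
  assume a: "i \<in> {1..k}" "j \<in> {1..k}" "ch i = ch j"
  then have "(i = j \<and> nx i = nx j) \<or> (i = nx j \<and> nx i = j)"
    unfolding ch_def using vi_eq[OF a(1) a(2)] vi_eq[OF nx_range[OF a(1)] nx_range[OF a(2)]]
      vi_eq[OF a(1) nx_range[OF a(2)]] vi_eq[OF nx_range[OF a(1)] a(2)] by (auto simp: doubleton_eq_iff)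
  then show "i = j" using nxnx[OF a(2)] by auto
qed simp

lemma E_eq: "wheel_edges v k = rad ` {1..k} \<union> ch ` {1..k}"
  unfolding wheel_edges_def rad_def ch_def nx_def by auto

lemma mem_rad:
  assumes "X \<subseteq> {1..k}" "C \<subseteq> {1..k}" "i \<in> {1..k}"
  shows "rad i \<in> mkT X C \<longleftrightarrow> i \<in> X"
proof
  assume "rad i \<in> mkT X C"
  then consider (a) j where "j \<in> X" "rad i = rad j" | (b) j where "j \<in> C" "rad i = ch j"
    unfolding mkT_def by blast
  then show "i \<in> X"
  proof cases
    case a then show ?thesis using rad_inj[OF assms(3), of j] assms(1) by auto
  next
    case b then show ?thesis using rad_ne_ch[OF assms(3), of j] assms(2) by auto
  qed
qed (auto simp: mkT_def)

lemma mem_ch: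
  assumes "X \<subseteq> {1..k}" "C \<subseteq> {1..k}" "i \<in> {1..k}"
  shows "ch i \<in> mkT X C \<longleftrightarrow> i \<in> C"
proof
  assume "ch i \<in> mkT X C"
  then consider (a) j where "j \<in> X" "ch i = rad j" | (b) j where "j \<in> C" "ch i = ch j"
    unfolding mkT_def by blast
  then show "i \<in> C"
  proof cases
    case a then show ?thesis using rad_ne_ch[OF _ assms(3), of j] assms(1) by auto
  next
    case b then show ?thesis using ch_inj[OF assms(3), of j] assms(2) by auto
  qed
qed (auto simp: mkT_def)

lemma mkT_inj:
  assumes "X \<subseteq> {1..k}" "C \<subseteq> {1..k}" "X' \<subseteq> {1..k}" "C' \<subseteq> {1..k}" "mkT X C = mkT X' C'"
  shows "X = X' \<and> C = C'"
proof
  show "X = X'"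
  proof (rule set_eqI)
    fix i show "i \<in> X \<longleftrightarrow> i \<in> X'"
      using mem_rad[OF assms(1,2), of i] mem_rad[OF assms(3,4), of i] assms(1,3,5) by auto
  qed
  show "C = C'"
  proof (rule set_eqI)
    fix i show "i \<in> C \<longleftrightarrow> i \<in> C'"
      using mem_ch[OF assms(1,2), of i] mem_ch[OF assms(3,4), of i] assms(2,4,5) by auto
  qed
qed

lemma mkT_sub: "X \<subseteq> {1..k} \<Longrightarrow> C \<subseteq> {1..k} \<Longrightarrow> mkT X C \<subseteq> wheel_edges v k"
  unfolding E_eq mkT_def by auto

lemma E_minus:
  assumes "X \<subseteq> {1..k}" "C \<subseteq> {1..k}"
  shows "wheel_edges v k - mkT X C = mkT ({1..k} - X) ({1..k} - C)"
proof -
  have "e \<in> wheel_edges v k - mkT X C \<longleftrightarrow> e \<in> mkT ({1..k} - X) ({1..k} - C)" for e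
  proof -
    have "e \<in> wheel_edges v k \<longleftrightarrow> (\<exists>i\<in>{1..k}. e = rad i) \<or> (\<exists>i\<in>{1..k}. e = ch i)"
      unfolding E_eq by auto
    moreover have "e \<in> mkT ({1..k} - X) ({1..k} - C) \<longleftrightarrow> (\<exists>i\<in>{1..k}. e = rad i \<and> i \<notin> X) \<or> (\<exists>i\<in>{1..k}. e = ch i \<and> i \<notin> C)"
      unfolding mkT_def by auto
    ultimately show ?thesis using mem_rad[OF assms] mem_ch[OF assms] by auto
  qed
  then show ?thesis by (rule set_eqI)
qed

lemma edge_at:
  assumes "i \<in> {1..k}" "e \<in> wheel_edges v k" "v i \<in> e"
  shows "e = rad i \<or> e = ch i \<or> e = ch (pv i)"
proof -
  from assms(2) consider (r) j where "j \<in> {1..k}" "e = rad j" | (c) j where "j \<in> {1..k}" "e = ch j"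
    unfolding E_eq by blast
  then show ?thesis
  proof cases
    case r
    then have "v i = v 0 \<or> v i = v j" using assms(3) unfolding rad_def by simp
    then have "j = i" using v0_ne[OF assms(1)] vi_eq[OF assms(1) r(1)] by blast
    then show ?thesis using r by simp
  next
    case c
    then have "v i = v j \<or> v i = v (nx j)" using assms(3) unfolding ch_def by simp
    then have "j = i \<or> nx j = i" using vi_eq[OF assms(1) c(1)] vi_eq[OF assms(1) nx_range[OF c(1)]] by blast
    then show ?thesis using c pv_nx by auto
  qed
qed

lemma pairs_sub: "wheel_edges v k \<subseteq> {{x, y} | x y. x \<in> wheel_vertices v k \<and> y \<in> wheel_vertices v k \<and> x \<noteq> y}"
proof
  fix e assume "e \<in> wheel_edges v k"
  then consider (r) j where "j \<in> {1..k}" "e = rad j" | (c) j where "j \<in> {1..k}" "e = ch j"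
    unfolding E_eq by blast
  then show "e \<in> {{x, y} | x y. x \<in> wheel_vertices v k \<and> y \<in> wheel_vertices v k \<and> x \<noteq> y}"
  proof cases
    case r
    have "v 0 \<in> wheel_vertices v k" "v j \<in> wheel_vertices v k" using r(1) unfolding wheel_vertices_def by auto
    then show ?thesis using r v0_ne[OF r(1)] unfolding rad_def by blast
  next
    case c
    have "v j \<in> wheel_vertices v k" "v (nx j) \<in> wheel_vertices v k" using c(1) nx_range[OF c(1)] unfolding wheel_vertices_def by auto
    moreover have "v j \<noteq> v (nx j)" using vi_eq[OF c(1) nx_range[OF c(1)]] nx_neq[OF c(1)] by auto
    ultimately show ?thesis using c unfolding ch_def by blast
  qed
qed

end

context wheel begin

lemma vi_in_V: "i \<le> k \<Longrightarrow> v i \<in> wheel_vertices v k" unfolding wheel_vertices_def by auto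

lemma TA_tree:
  assumes C: "C \<subseteq> {1..k}" and ne: "C \<noteq> {}" and nf: "C \<noteq> {1..k}"
  shows "spanning_tree (wheel_vertices v k) (TA C)"
proof -
  obtain c where c: "c \<in> {1..k}" "c \<notin> C" using C nf by blast
  define b where "b = nx c"
  have b: "b \<in> {1..k}" "pv b \<notin> C" using c nx_range pv_nx unfolding b_def by auto
  define idx where "idx u = inv_into {0..k} v u" for u
  have idx: "idx (v i) = i" if "i \<le> k" for i using that vinj unfolding idx_def by (simp add: inv_into_f_f)
  define par where "par u = (if pv (idx u) \<notin> C then v 0 else v (pv (idx u)))" for u
  define f :: "'a \<Rightarrow> nat" where "f u = (let i = idx u in if i = 0 then 0 else if b \<le> i then i - b + 1 else i + k - b + 1)" for u
  have XA: "{i\<in>{1..k}. pv i \<notin> C} \<subseteq> {1..k}" by auto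
  show ?thesis
  proof (rule tree_by_parent[where r = "v 0" and par = par and f = f])
    show "TA C \<subseteq> {{x, y} |x y. x \<in> wheel_vertices v k \<and> y \<in> wheel_vertices v k \<and> x \<noteq> y}"
      using mkT_sub[OF XA C] pairs_sub unfolding TA_def by blast
    show "v 0 \<in> wheel_vertices v k" by (simp add: vi_in_V)
  next
    fix u assume u: "u \<in> wheel_vertices v k" "u \<noteq> v 0"
    then obtain i where i: "i \<in> {1..k}" "u = v i" unfolding wheel_vertices_def
      by (metis atLeastAtMost_iff imageE le_zero_eq not_less_eq_eq Suc_eq_plus1 One_nat_def)
    have ii: "idx u = i" using i idx by auto
    show "par u \<in> wheel_vertices v k \<and> {u, par u} \<in> TA C \<and> f (par u) < f u"
    proof (cases "pv i \<in> C")
      case False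
      then have "par u = v 0" unfolding par_def ii by simp
      moreover have "rad i \<in> TA C" unfolding TA_def mkT_def using i False by auto
      moreover have "f u > 0" unfolding f_def ii Let_def using i by auto
      moreover have "f (v 0) = 0" unfolding f_def using idx[of 0] by simp
      ultimately show ?thesis using i unfolding rad_def by (auto simp: vi_in_V insert_commute)
    next
      case True
      then have pu: "par u = v (pv i)" unfolding par_def ii by simp
      have pr: "pv i \<in> {1..k}" using pv_range i by auto
      have "ch (pv i) \<in> TA C" unfolding TA_def mkT_def using True by auto
      then have "{u, par u} \<in> TA C" using pu i(2) nx_pv[OF i(1)] unfolding ch_def by (simp add: insert_commute)
      moreover have "i \<noteq> b" using True b by auto
      then have "f (v (pv i)) < f (v i)" unfolding f_def Let_def using idx i pr k3 b(1)
        by (auto simp: pv_def)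
      ultimately show ?thesis using pu pr i by (auto simp: vi_in_V)
    qed
  next
    fix e assume "e \<in> TA C"
    then consider (r) i where "i \<in> {1..k}" "pv i \<notin> C" "e = rad i" | (c) j where "j \<in> C" "e = ch j"
      unfolding TA_def mkT_def by blast
    then show "\<exists>u\<in>wheel_vertices v k. u \<noteq> v 0 \<and> e = {u, par u}"
    proof cases
      case r
      have "par (v i) = v 0" unfolding par_def using idx r by simp
      then show ?thesis using r v0_ne[OF r(1)] vi_in_V[of i] unfolding rad_def by (auto simp: insert_commute)
    next
      case c
      have j: "j \<in> {1..k}" using c C by auto
      have "par (v (nx j)) = v j" unfolding par_def using idx nx_range[OF j] pv_nx[OF j] c by simp
      then show ?thesis using c v0_ne[OF nx_range[OF j]] vi_in_V[of "nx j"] nx_range[OF j] unfolding ch_def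
        by (auto simp: insert_commute)
    qed
  qed
qed

lemma TB_tree:
  assumes C: "C \<subseteq> {1..k}" and ne: "C \<noteq> {}" and nf: "C \<noteq> {1..k}"
  shows "spanning_tree (wheel_vertices v k) (TB C)"
proof -
  obtain b where b: "b \<in> {1..k}" "b \<notin> C" using C nf by blast
  define idx where "idx u = inv_into {0..k} v u" for u
  have idx: "idx (v i) = i" if "i \<le> k" for i using that vinj unfolding idx_def by (simp add: inv_into_f_f)
  define par where "par u = (if idx u \<notin> C then v 0 else v (nx (idx u)))" for u
  define f :: "'a \<Rightarrow> nat" where "f u = (let i = idx u in if i = 0 then 0 else if i \<le> b then b - i + 1 else b + k - i + 1)" for u
  have XB: "{i\<in>{1..k}. i \<notin> C} \<subseteq> {1..k}" by auto
  show ?thesis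
  proof (rule tree_by_parent[where r = "v 0" and par = par and f = f])
    show "TB C \<subseteq> {{x, y} |x y. x \<in> wheel_vertices v k \<and> y \<in> wheel_vertices v k \<and> x \<noteq> y}"
      using mkT_sub[OF XB C] pairs_sub unfolding TB_def by blast
    show "v 0 \<in> wheel_vertices v k" by (simp add: vi_in_V)
  next
    fix u assume u: "u \<in> wheel_vertices v k" "u \<noteq> v 0"
    then obtain i where i: "i \<in> {1..k}" "u = v i" unfolding wheel_vertices_def
      by (metis atLeastAtMost_iff imageE le_zero_eq not_less_eq_eq Suc_eq_plus1 One_nat_def)
    have ii: "idx u = i" using i idx by auto
    show "par u \<in> wheel_vertices v k \<and> {u, par u} \<in> TB C \<and> f (par u) < f u"
    proof (cases "i \<in> C")
      case False
      then have "par u = v 0" unfolding par_def ii by simp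
      moreover have "rad i \<in> TB C" unfolding TB_def mkT_def using i False by auto
      moreover have "f u > 0" unfolding f_def ii Let_def using i by auto
      moreover have "f (v 0) = 0" unfolding f_def using idx[of 0] by simp
      ultimately show ?thesis using i unfolding rad_def by (auto simp: vi_in_V insert_commute)
    next
      case True
      then have pu: "par u = v (nx i)" unfolding par_def ii by simp
      have pr: "nx i \<in> {1..k}" using nx_range i by auto
      have "ch i \<in> TB C" unfolding TB_def mkT_def using True by auto
      then have "{u, par u} \<in> TB C" using pu i(2) unfolding ch_def by simp
      moreover have "i \<noteq> b" using True b by auto
      then have "f (v (nx i)) < f (v i)" unfolding f_def Let_def using idx i pr k3 b
        by (auto simp: nx_def)
      ultimately show ?thesis using pu pr i by (auto simp: vi_in_V)
    qed
  next
    fix e assume "e \<in> TB C"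
    then consider (r) i where "i \<in> {1..k}" "i \<notin> C" "e = rad i" | (c) j where "j \<in> C" "e = ch j"
      unfolding TB_def mkT_def by blast
    then show "\<exists>u\<in>wheel_vertices v k. u \<noteq> v 0 \<and> e = {u, par u}"
    proof cases
      case r
      have "par (v i) = v 0" unfolding par_def using idx r by simp
      then show ?thesis using r v0_ne[OF r(1)] vi_in_V[of i] unfolding rad_def by (auto simp: insert_commute)
    next
      case c
      have j: "j \<in> {1..k}" using c C by auto
      have "par (v j) = v (nx j)" unfolding par_def using idx j c by simp
      then show ?thesis using c v0_ne[OF j] vi_in_V[of j] j unfolding ch_def
        by auto
    qed
  qed
qed

end

context wheel begin

lemma TA_compl: assumes C: "C \<subseteq> {1..k}" shows "wheel_edges v k - TA C = TA ({1..k} - C)"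
proof -
  have XA: "{i\<in>{1..k}. pv i \<notin> C} \<subseteq> {1..k}" by auto
  have "{1..k} - {i\<in>{1..k}. pv i \<notin> C} = {i\<in>{1..k}. pv i \<notin> {1..k} - C}"
  proof (rule set_eqI)
    fix i show "i \<in> {1..k} - {i\<in>{1..k}. pv i \<notin> C} \<longleftrightarrow> i \<in> {i\<in>{1..k}. pv i \<notin> {1..k} - C}"
      using pv_range[of i] by blast
  qed
  then show ?thesis unfolding TA_def E_minus[OF XA C] by (simp only:)
qed

lemma TB_compl: assumes C: "C \<subseteq> {1..k}" shows "wheel_edges v k - TB C = TB ({1..k} - C)"
proof -
  have XB: "{i\<in>{1..k}. i \<notin> C} \<subseteq> {1..k}" by auto
  have "{1..k} - {i\<in>{1..k}. i \<notin> C} = {i\<in>{1..k}. i \<notin> {1..k} - C}" by blast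
  then show ?thesis unfolding TB_def E_minus[OF XB C] by (simp only:)
qed

lemma TA_coupled:
  assumes C: "C \<subseteq> {1..k}" and ne: "C \<noteq> {}" and nf: "C \<noteq> {1..k}"
  shows "coupled_tree (wheel_vertices v k) (wheel_edges v k) (TA C)"
proof -
  have XA: "{i\<in>{1..k}. pv i \<notin> C} \<subseteq> {1..k}" by auto
  have "{1..k} - C \<noteq> {}" "{1..k} - C \<noteq> {1..k}" using C ne nf by auto
  moreover have "TA C \<subseteq> wheel_edges v k" using mkT_sub[OF XA C] unfolding TA_def .
  ultimately show ?thesis unfolding coupled_tree_def TA_compl[OF C]
    using TA_tree[OF C ne nf] TA_tree[of "{1..k} - C"] by blast
qed

lemma TB_coupled:
  assumes C: "C \<subseteq> {1..k}" and ne: "C \<noteq> {}" and nf: "C \<noteq> {1..k}"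
  shows "coupled_tree (wheel_vertices v k) (wheel_edges v k) (TB C)"
proof -
  have XB: "{i\<in>{1..k}. i \<notin> C} \<subseteq> {1..k}" by auto
  have "{1..k} - C \<noteq> {}" "{1..k} - C \<noteq> {1..k}" using C ne nf by auto
  moreover have "TB C \<subseteq> wheel_edges v k" using mkT_sub[OF XB C] unfolding TB_def .
  ultimately show ?thesis unfolding coupled_tree_def TB_compl[OF C]
    using TB_tree[OF C ne nf] TB_tree[of "{1..k} - C"] by blast
qed

lemma val_mkT:
  assumes X: "X \<subseteq> {1..k}" and C: "C \<subseteq> {1..k}" and i: "i \<in> {1..k}"
  shows "val (mkT X C) (v i) = (if i \<in> X then 1 else 0) + (if i \<in> C then 1 else 0) + (if pv i \<in> C then 1 else 0)"
proof -
  have pr: "pv i \<in> {1..k}" using pv_range[OF i] .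
  have eq: "{e \<in> mkT X C. v i \<in> e} = (if i \<in> X then {rad i} else {}) \<union> (if i \<in> C then {ch i} else {}) \<union> (if pv i \<in> C then {ch (pv i)} else {})"
  proof (rule set_eqI)
    fix e
    show "e \<in> {e \<in> mkT X C. v i \<in> e} \<longleftrightarrow> e \<in> (if i \<in> X then {rad i} else {}) \<union> (if i \<in> C then {ch i} else {}) \<union> (if pv i \<in> C then {ch (pv i)} else {})"
    proof
      assume "e \<in> {e \<in> mkT X C. v i \<in> e}"
      then have e: "e \<in> mkT X C" "v i \<in> e" by auto
      then have "e = rad i \<or> e = ch i \<or> e = ch (pv i)" using edge_at[OF i] mkT_sub[OF X C] by blast
      then show "e \<in> (if i \<in> X then {rad i} else {}) \<union> (if i \<in> C then {ch i} else {}) \<union> (if pv i \<in> C then {ch (pv i)} else {})"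
        using e(1) mem_rad[OF X C i] mem_ch[OF X C i] mem_ch[OF X C pr] by auto
    next
      assume a: "e \<in> (if i \<in> X then {rad i} else {}) \<union> (if i \<in> C then {ch i} else {}) \<union> (if pv i \<in> C then {ch (pv i)} else {})"
      have "v i \<in> rad i" "v i \<in> ch i" "v i \<in> ch (pv i)" unfolding rad_def ch_def nx_pv[OF i] by auto
      moreover have "rad i \<in> mkT X C" if "i \<in> X" using that unfolding mkT_def by auto
      moreover have "ch j \<in> mkT X C" if "j \<in> C" for j using that unfolding mkT_def by auto
      moreover from a have "(e = rad i \<and> i \<in> X) \<or> (e = ch i \<and> i \<in> C) \<or> (e = ch (pv i) \<and> pv i \<in> C)"
        by (auto split: if_splits)
      ultimately show "e \<in> {e \<in> mkT X C. v i \<in> e}" by blast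
    qed
  qed
  have d1: "rad i \<noteq> ch i" "rad i \<noteq> ch (pv i)" using rad_ne_ch[OF i i] rad_ne_ch[OF i pr] by auto
  have d2: "ch i \<noteq> ch (pv i)" using ch_inj[OF i pr] pv_neq[OF i] by auto
  show ?thesis unfolding val_def eq by (rule card3[OF d1(1) d1(2) d2])
qed

lemma val_TA: assumes C: "C \<subseteq> {1..k}" and i: "i \<in> {1..k}" shows "val (TA C) (v i) = (if i \<in> C then 2 else 1)"
proof -
  have "{i\<in>{1..k}. pv i \<notin> C} \<subseteq> {1..k}" by auto
  from val_mkT[OF this C i] show ?thesis unfolding TA_def using i by (cases "pv i \<in> C") auto
qed

lemma val_TB: assumes C: "C \<subseteq> {1..k}" and i: "i \<in> {1..k}" shows "val (TB C) (v i) = (if pv i \<in> C then 2 else 1)"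
proof -
  have "{i\<in>{1..k}. i \<notin> C} \<subseteq> {1..k}" by auto
  from val_mkT[OF this C i] show ?thesis unfolding TB_def using i by (cases "i \<in> C") auto
qed

end

context wheel begin

lemma k_pos: "k > 0" using k3 by simp

lemma wr_range: "wr j t \<in> {1..k}"
proof -
  have "(j - 1 + t) mod k < k" using k_pos by (rule mod_less_divisor)
  then show ?thesis unfolding wr_def by simp
qed
lemma wr0: assumes "j \<in> {1..k}" shows "wr j 0 = j"
proof -
  have "j - 1 < k" using assms by auto
  then have "(j - 1) mod k = j - 1" by (rule mod_less)
  then show ?thesis unfolding wr_def using assms by simp
qed
lemma nx_wr: "nx (wr j t) = wr j (Suc t)"
proof -
  have "Suc (j - 1 + t) mod k = (if Suc ((j - 1 + t) mod k) = k then 0 else Suc ((j - 1 + t) mod k))"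
    by (rule mod_Suc)
  then show ?thesis unfolding wr_def nx_def by auto
qed
lemma pv_wr: "pv (wr j (Suc t)) = wr j t" using pv_nx[OF wr_range] nx_wr by metis
lemma wr_add: "j \<in> {1..k} \<Longrightarrow> wr (wr j t) u = wr j (t + u)"
  unfolding wr_def by (simp add: mod_add_left_eq add.assoc)
lemma mod_cancel_small:
  fixes a t t' :: nat
  assumes "t < k" "t' < k" "(a + t) mod k = (a + t') mod k" shows "t = t'"
proof -
  define r where "r = a mod k"
  have r: "r < k" unfolding r_def using k_pos by simp
  have e: "(a + s) mod k = (r + s) mod k" for s unfolding r_def by (simp add: mod_add_left_eq)
  have h: "(r + s) mod k = (if r + s < k then r + s else r + s - k)" if "s < k" for s
  proof (cases "r + s < k")
    case True then show ?thesis by simp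
  next
    case False
    then have "(r + s) mod k = (r + s - k) mod k" by (simp add: le_mod_geq)
    also have "r + s - k < k" using r that by simp
    then have "(r + s - k) mod k = r + s - k" by simp
    finally show ?thesis using False by simp
  qed
  show ?thesis using assms e h[of t] h[of t'] r by (auto split: if_splits)
qed
lemma wr_inj: assumes "t < k" "t' < k" "wr j t = wr j t'" shows "t = t'"
proof -
  have "(j - 1 + t) mod k = (j - 1 + t') mod k" using assms(3) unfolding wr_def by simp
  then show ?thesis using mod_cancel_small assms(1,2) by blast
qed
lemma wr_surj: assumes "i \<in> {1..k}" "j \<in> {1..k}" shows "\<exists>t<k. wr j t = i"
proof (intro exI conjI)
  show "(i + k - j) mod k < k" using k_pos by simp
  have "(j - 1 + (i + k - j) mod k) mod k = (j - 1 + (i + k - j)) mod k" by (simp add: mod_add_right_eq)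
  also have "j - 1 + (i + k - j) = (i - 1) + k" using assms by auto
  also have "(i - 1 + k) mod k = (i - 1) mod k" by (simp only: mod_add_self2)
  also have "i - 1 < k" using assms by auto
  then have "(i - 1) mod k = i - 1" by (rule mod_less)
  finally show "wr j ((i + k - j) mod k) = i" unfolding wr_def using assms by simp
qed

lemma allch_cycle:
  assumes "\<forall>i\<in>{1..k}. ch i \<in> T'"
  shows "has_cycle T'"
  unfolding has_cycle_def
proof (intro exI conjI allI impI)
  let ?xs = "map v [1..<k+1]"
  show "3 \<le> length ?xs" using k3 by simp
  have "inj_on v (set [1..<k+1])" using vinj by (rule inj_on_subset) auto
  then show "distinct ?xs" by (simp add: distinct_map)
  fix q assume q: "q < length ?xs"
  then have q': "q < k" by (simp del: upt_Suc)
  have xq: "?xs ! q = v (q + 1)" using q' by (simp add: nth_map_upt del: upt_Suc)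
  have "?xs ! ((q + 1) mod length ?xs) = v (nx (q + 1))"
  proof (cases "q + 1 < k")
    case True then show ?thesis using q' by (simp add: nth_map_upt nx_def del: upt_Suc)
  next
    case False then have "q + 1 = k" using q' by simp
    then show ?thesis using k_pos by (simp add: nx_def del: upt_Suc)
  qed
  moreover have "ch (q + 1) \<in> T'" using assms q' by simp
  ultimately show "{?xs ! q, ?xs ! ((q + 1) mod length ?xs)} \<in> T'" using xq unfolding ch_def by simp
qed

lemma arc_cycle:
  assumes j: "j \<in> {1..k}" and m: "1 \<le> m" "m < k" and r1: "rad j \<in> T'" and r2: "rad (wr j m) \<in> T'"
    and cs: "\<forall>t<m. ch (wr j t) \<in> T'"
  shows "has_cycle T'"
  unfolding has_cycle_def
proof (intro exI conjI allI impI)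
  let ?ys = "map (\<lambda>t. v (wr j t)) [0..<m+1]"
  let ?xs = "v 0 # ?ys"
  have len: "length ?xs = m + 2" by simp
  show "3 \<le> length ?xs" using m by simp
  have "inj_on (\<lambda>t. v (wr j t)) (set [0..<m+1])"
  proof (rule inj_onI)
    fix t t' assume "t \<in> set [0..<m+1]" "t' \<in> set [0..<m+1]" "v (wr j t) = v (wr j t')"
    then show "t = t'" using vi_eq[OF wr_range wr_range] wr_inj[of t t' j] m by auto
  qed
  moreover have "v 0 \<notin> set ?ys"
  proof
    assume "v 0 \<in> set ?ys"
    then obtain t where "v 0 = v (wr j t)" by auto
    then show False using v0_ne[OF wr_range[of j t]] by simp
  qed
  ultimately show "distinct ?xs" by (simp add: distinct_map)
  fix q assume q: "q < length ?xs"
  show "{?xs ! q, ?xs ! ((q + 1) mod length ?xs)} \<in> T'"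
  proof (cases "q = 0")
    case True
    then show ?thesis using r1 wr0[OF j] m unfolding rad_def by (simp del: upt_Suc)
  next
    case False
    then obtain q0 where q0: "q = Suc q0" by (cases q) auto
    have xq: "?xs ! q = v (wr j q0)" using q q0 by (simp del: upt_Suc)
    show ?thesis
    proof (cases "q0 < m")
      case True
      then have "(q + 1) mod length ?xs = Suc (Suc q0)" using q0 len by simp
      then have "?xs ! ((q + 1) mod length ?xs) = v (wr j (Suc q0))" using True by (simp del: upt_Suc)
      then show ?thesis using xq cs True unfolding ch_def nx_wr by auto
    next
      case False
      then have "q0 = m" using q q0 by simp
      then have "(q + 1) mod length ?xs = 0" using q0 len by simp
      then show ?thesis using xq r2 \<open>q0 = m\<close> unfolding rad_def by (simp add: insert_commute)
    qed
  qed
qed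

lemma deg:
  assumes st: "spanning_tree (wheel_vertices v k) T'" and sub: "T' \<subseteq> wheel_edges v k" and i: "i \<in> {1..k}"
  shows "rad i \<in> T' \<or> ch i \<in> T' \<or> ch (pv i) \<in> T'"
proof -
  have "v i \<in> wheel_vertices v k" "v 0 \<in> wheel_vertices v k" using i vi_in_V by auto
  then have "(adj T')\<^sup>*\<^sup>* (v i) (v 0)" using st unfolding spanning_tree_def connected_on_def by blast
  then obtain y where "adj T' (v i) y" using v0_ne[OF i] by (metis converse_rtranclpE)
  then have y: "{v i, y} \<in> T'" unfolding adj_def by simp
  then have "{v i, y} = rad i \<or> {v i, y} = ch i \<or> {v i, y} = ch (pv i)" using edge_at[OF i] sub by blast
  then show ?thesis using y by metis
qed

end

context wheel begin

lemma dich: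
  assumes ct: "coupled_tree (wheel_vertices v k) (wheel_edges v k) T"
  shows "(\<forall>i\<in>{1..k}. rad i \<in> T \<longleftrightarrow> ch (pv i) \<notin> T) \<or> (\<forall>i\<in>{1..k}. rad i \<in> T \<longleftrightarrow> ch i \<notin> T)"
proof (rule ccontr)
  define E where "E = wheel_edges v k"
  define xb where "xb q = (rad q \<in> T)" for q
  define cb where "cb q = (ch q \<in> T)" for q
  define A where "A q = (xb q \<noteq> cb (pv q))" for q
  define B where "B q = (xb q \<noteq> cb q)" for q
  have sub: "T \<subseteq> E" and st1: "spanning_tree (wheel_vertices v k) T" and st2: "spanning_tree (wheel_vertices v k) (E - T)"
    using ct unfolding coupled_tree_def E_def by auto
  have nc1: "\<not> has_cycle T" and nc2: "\<not> has_cycle (E - T)" using st1 st2 unfolding spanning_tree_def by auto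
  have radE: "rad q \<in> E" if "q \<in> {1..k}" for q using that unfolding E_def E_eq by blast
  have chE: "ch q \<in> E" if "q \<in> {1..k}" for q using that unfolding E_def E_eq by blast
  have AB: "A q \<or> B q" if q: "q \<in> {1..k}" for q
  proof -
    have "rad q \<in> T \<or> ch q \<in> T \<or> ch (pv q) \<in> T" using deg[OF st1 sub[unfolded E_def] q] .
    moreover have "rad q \<in> E - T \<or> ch q \<in> E - T \<or> ch (pv q) \<in> E - T" using deg[OF st2 _ q] unfolding E_def by blast
    ultimately show ?thesis unfolding A_def B_def xb_def cb_def by blast
  qed
  assume neg: "\<not> ((\<forall>i\<in>{1..k}. rad i \<in> T \<longleftrightarrow> ch (pv i) \<notin> T) \<or> (\<forall>i\<in>{1..k}. rad i \<in> T \<longleftrightarrow> ch i \<notin> T))"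
  then obtain i0 j0 where i0: "i0 \<in> {1..k}" "\<not> A i0" and j0: "j0 \<in> {1..k}" "\<not> B j0"
    unfolding A_def B_def xb_def cb_def by blast
  have "i0 \<noteq> j0" using AB[OF i0(1)] i0 j0 by blast
  define M where "M = {m. 1 \<le> m \<and> m < k \<and> (\<exists>j\<in>{1..k}. \<not> B j \<and> \<not> A (wr j m))}"
  obtain t where t: "t < k" "wr j0 t = i0" using wr_surj[OF i0(1) j0(1)] by blast
  have "t \<noteq> 0" using t wr0[OF j0(1)] \<open>i0 \<noteq> j0\<close> by (metis)
  then have "t \<in> M" unfolding M_def using t i0 j0 by auto
  define m where "m = Least (\<lambda>m. m \<in> M)"
  have mM: "m \<in> M" unfolding m_def using \<open>t \<in> M\<close> by (rule LeastI)
  have mmin: "\<And>m'. m' \<in> M \<Longrightarrow> m \<le> m'" unfolding m_def by (rule Least_le)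
  from mM obtain j where m: "1 \<le> m" "m < k" and j: "j \<in> {1..k}" "\<not> B j" "\<not> A (wr j m)"
    unfolding M_def by blast
  have interior: "A (wr j s) \<and> B (wr j s)" if s: "0 < s" "s < m" for s
  proof
    show "A (wr j s)"
    proof (rule ccontr)
      assume "\<not> A (wr j s)"
      then have "s \<in> M" unfolding M_def using s m j by auto
      then show False using mmin s by fastforce
    qed
    show "B (wr j s)"
    proof (rule ccontr)
      assume nb: "\<not> B (wr j s)"
      have "wr (wr j s) (m - s) = wr j m" using wr_add[OF j(1)] s by simp
      then have "m - s \<in> M" unfolding M_def using s m j nb wr_range[of j s] by (auto intro!: bexI[of _ "wr j s"])
      then show False using mmin s by fastforce
    qed
  qed
  define c where "c = cb j"
  have chords: "cb (wr j s) = c" if "s < m" for s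
    using that
  proof (induction s)
    case 0 then show ?case unfolding c_def using wr0[OF j(1)] by simp
  next
    case (Suc s)
    then have "cb (wr j s) = c" by simp
    moreover have "A (wr j (Suc s))" "B (wr j (Suc s))" using interior[of "Suc s"] Suc.prems by auto
    ultimately show ?case unfolding A_def B_def pv_wr by blast
  qed
  have xj: "xb j = c" using j(2) unfolding B_def c_def by blast
  have "m = Suc (m - 1)" using m by simp
  then have "pv (wr j m) = wr j (m - 1)" using pv_wr by metis
  then have xm: "xb (wr j m) = c" using j(3) chords[of "m - 1"] m unfolding A_def by auto
  show False
  proof (cases c)
    case True
    have "has_cycle T"
    proof (rule arc_cycle[OF j(1) m])
      show "rad j \<in> T" using xj True unfolding xb_def by simp
      show "rad (wr j m) \<in> T" using xm True unfolding xb_def by simp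
      show "\<forall>t<m. ch (wr j t) \<in> T" using chords True unfolding cb_def by simp
    qed
    then show False using nc1 by simp
  next
    case False
    have "has_cycle (E - T)"
    proof (rule arc_cycle[OF j(1) m])
      show "rad j \<in> E - T" using xj False radE[OF j(1)] unfolding xb_def by simp
      show "rad (wr j m) \<in> E - T" using xm False radE[OF wr_range] unfolding xb_def by simp
      show "\<forall>t<m. ch (wr j t) \<in> E - T" using chords False chE[OF wr_range] unfolding cb_def by simp
    qed
    then show False using nc2 by simp
  qed
qed

end

context wheel begin

definition PP where "PP = {C. C \<subseteq> {1..k} \<and> C \<noteq> {} \<and> C \<noteq> {1..k}}"

lemma coupled_char:
  "coupled_tree (wheel_vertices v k) (wheel_edges v k) T \<longleftrightarrow> (\<exists>C\<in>PP. T = TA C \<or> T = TB C)"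
proof
  assume ct: "coupled_tree (wheel_vertices v k) (wheel_edges v k) T"
  define E where "E = wheel_edges v k"
  have sub: "T \<subseteq> E" and st1: "spanning_tree (wheel_vertices v k) T" and st2: "spanning_tree (wheel_vertices v k) (E - T)"
    using ct unfolding coupled_tree_def E_def by auto
  have nc1: "\<not> has_cycle T" and nc2: "\<not> has_cycle (E - T)" using st1 st2 unfolding spanning_tree_def by auto
  define X where "X = {i\<in>{1..k}. rad i \<in> T}"
  define C where "C = {i\<in>{1..k}. ch i \<in> T}"
  have X: "X \<subseteq> {1..k}" and C: "C \<subseteq> {1..k}" unfolding X_def C_def by auto
  have TX: "T = mkT X C"
  proof (rule set_eqI)
    fix e show "e \<in> T \<longleftrightarrow> e \<in> mkT X C"
    proof
      assume "e \<in> T"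
      moreover then have "e \<in> rad ` {1..k} \<union> ch ` {1..k}" using sub unfolding E_def E_eq by blast
      ultimately show "e \<in> mkT X C" unfolding mkT_def X_def C_def by blast
    next
      assume "e \<in> mkT X C"
      then show "e \<in> T" unfolding mkT_def X_def C_def by blast
    qed
  qed
  have "C \<noteq> {}"
  proof
    assume "C = {}"
    then have "\<forall>i\<in>{1..k}. ch i \<in> E - T" unfolding C_def E_def E_eq by blast
    then show False using allch_cycle nc2 by blast
  qed
  moreover have "C \<noteq> {1..k}"
  proof
    assume "C = {1..k}"
    then have "\<forall>i\<in>{1..k}. ch i \<in> T" unfolding C_def by blast
    then show False using allch_cycle nc1 by blast
  qed
  ultimately have CP: "C \<in> PP" unfolding PP_def using C by blast
  from dich[OF ct] show "\<exists>C\<in>PP. T = TA C \<or> T = TB C"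
  proof
    assume a: "\<forall>i\<in>{1..k}. rad i \<in> T \<longleftrightarrow> ch (pv i) \<notin> T"
    have "X = {i\<in>{1..k}. pv i \<notin> C}"
    proof (rule set_eqI)
      fix i show "i \<in> X \<longleftrightarrow> i \<in> {i\<in>{1..k}. pv i \<notin> C}"
        using a pv_range[of i] unfolding X_def C_def by blast
    qed
    then have "T = TA C" unfolding TA_def TX by simp
    then show ?thesis using CP by blast
  next
    assume a: "\<forall>i\<in>{1..k}. rad i \<in> T \<longleftrightarrow> ch i \<notin> T"
    have "X = {i\<in>{1..k}. i \<notin> C}"
    proof (rule set_eqI)
      fix i show "i \<in> X \<longleftrightarrow> i \<in> {i\<in>{1..k}. i \<notin> C}"
        using a unfolding X_def C_def by blast
    qed
    then have "T = TB C" unfolding TB_def TX by simp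
    then show ?thesis using CP by blast
  qed
next
  assume "\<exists>C\<in>PP. T = TA C \<or> T = TB C"
  then show "coupled_tree (wheel_vertices v k) (wheel_edges v k) T"
    unfolding PP_def using TA_coupled TB_coupled by blast
qed

lemma TA_TB_disj: assumes "C \<in> PP" "C' \<in> PP" shows "TA C \<noteq> TB C'"
proof
  assume eq: "TA C = TB C'"
  have C: "C \<subseteq> {1..k}" "C' \<subseteq> {1..k}" using assms unfolding PP_def by auto
  have "{i\<in>{1..k}. pv i \<notin> C} = {i\<in>{1..k}. i \<notin> C'} \<and> C = C'"
    by (rule mkT_inj) (use eq C in \<open>auto simp: TA_def TB_def\<close>)
  then have cl: "pv i \<in> C \<longleftrightarrow> i \<in> C" if "i \<in> {1..k}" for i using that by blast
  have all: "j \<in> C \<longleftrightarrow> 1 \<in> C" if "1 \<le> j" "j \<le> k" for j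
    using that
  proof (induction j)
    case 0 then show ?case by simp
  next
    case (Suc j)
    show ?case
    proof (cases "j = 0")
      case True then show ?thesis by simp
    next
      case False
      then have "pv (Suc j) = j" unfolding pv_def by simp
      then show ?thesis using cl[of "Suc j"] Suc False by auto
    qed
  qed
  show False
  proof (cases "1 \<in> C")
    case True
    then have "C = {1..k}" using all C by auto
    then show False using assms unfolding PP_def by blast
  next
    case False
    then have "C = {}" using all C by auto
    then show False using assms unfolding PP_def by blast
  qed
qed

lemma TA_inj: "inj_on TA PP"
proof (rule inj_onI)
  fix C C' assume "C \<in> PP" "C' \<in> PP" "TA C = TA C'"
  moreover have "{i\<in>{1..k}. pv i \<notin> C} \<subseteq> {1..k}" "{i\<in>{1..k}. pv i \<notin> C'} \<subseteq> {1..k}" by auto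
  ultimately show "C = C'" using mkT_inj[of "{i\<in>{1..k}. pv i \<notin> C}" C "{i\<in>{1..k}. pv i \<notin> C'}" C']
    unfolding PP_def TA_def by blast
qed

lemma TB_inj: "inj_on TB PP"
proof (rule inj_onI)
  fix C C' assume "C \<in> PP" "C' \<in> PP" "TB C = TB C'"
  moreover have "{i\<in>{1..k}. i \<notin> C} \<subseteq> {1..k}" "{i\<in>{1..k}. i \<notin> C'} \<subseteq> {1..k}" by auto
  ultimately show "C = C'" using mkT_inj[of "{i\<in>{1..k}. i \<notin> C}" C "{i\<in>{1..k}. i \<notin> C'}" C']
    unfolding PP_def TB_def by blast
qed

lemma card_PP: "card PP = 2 ^ k - 2"
proof -
  have "PP = Pow {1..k} - {{}, {1..k}}" unfolding PP_def by auto
  moreover have "card (Pow {1..k::nat}) = 2 ^ k" by (simp add: card_Pow)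
  moreover have "card {{}, {1..k::nat}} = 2" using k3 by auto
  moreover have "{{}, {1..k}} \<subseteq> Pow {1..k::nat}" by auto
  ultimately show ?thesis by (simp add: card_Diff_subset)
qed

lemma finite_PP: "finite PP" unfolding PP_def by auto

lemma count_all: "card {T. coupled_tree (wheel_vertices v k) (wheel_edges v k) T} = 2 ^ (k + 1) - 4"
proof -
  have "{T. coupled_tree (wheel_vertices v k) (wheel_edges v k) T} = TA ` PP \<union> TB ` PP"
    using coupled_char by blast
  moreover have "TA ` PP \<inter> TB ` PP = {}" using TA_TB_disj by blast
  moreover have "card (TA ` PP) = card PP" using TA_inj by (rule card_image)
  moreover have "card (TB ` PP) = card PP" using TB_inj by (rule card_image)
  ultimately have "card {T. coupled_tree (wheel_vertices v k) (wheel_edges v k) T} = 2 * card PP"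
    using finite_PP by (simp add: card_Un_disjoint)
  moreover have "(2::nat) ^ k \<ge> 2" using k3
    by (metis One_nat_def Suc_1 le_add1 le_trans numeral_3_eq_3 plus_1_eq_Suc power_increasing power_one_right zero_less_Suc one_le_numeral)
  ultimately show ?thesis using card_PP by (simp add: right_diff_distrib')
qed

lemma count_d:
  assumes dv: "\<forall>i\<in>{1..k}. d i \<in> {1, 2}" and nc: "\<exists>i\<in>{1..k}. \<exists>j\<in>{1..k}. d i \<noteq> d j"
  shows "card {T. coupled_tree (wheel_vertices v k) (wheel_edges v k) T \<and> (\<forall>i\<in>{1..k}. val T (v i) = d i)} = 2"
proof -
  define D where "D = {i\<in>{1..k}. d i = (2::nat)}"
  define D' where "D' = {i\<in>{1..k}. d (nx i) = (2::nat)}"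
  obtain a b where ab: "a \<in> {1..k}" "b \<in> {1..k}" "d a = 2" "d b = 1"
    using nc dv by (metis insert_iff singletonD)
  have "a \<in> D" "b \<notin> D" unfolding D_def using ab by auto
  have DC: "D \<subseteq> {1..k}" "D' \<subseteq> {1..k}" unfolding D_def D'_def by auto
  have DP: "D \<in> PP" unfolding PP_def
  proof (intro CollectI conjI)
    show "D \<subseteq> {1..k}" by (rule DC(1))
    show "D \<noteq> {}" using \<open>a \<in> D\<close> by blast
    show "D \<noteq> {1..k}" using \<open>b \<notin> D\<close> ab(2) by blast
  qed
  have pa: "pv a \<in> D'" unfolding D'_def using ab(3) nx_pv[OF ab(1)] pv_range[OF ab(1)] by simp
  have pb: "pv b \<notin> D'" unfolding D'_def using ab(4) nx_pv[OF ab(2)] by simp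
  have D'P: "D' \<in> PP" unfolding PP_def
  proof (intro CollectI conjI)
    show "D' \<subseteq> {1..k}" by (rule DC(2))
    show "D' \<noteq> {}" using pa by blast
    show "D' \<noteq> {1..k}" using pb pv_range[OF ab(2)] by blast
  qed
  let ?S = "{T. coupled_tree (wheel_vertices v k) (wheel_edges v k) T \<and> (\<forall>i\<in>{1..k}. val T (v i) = d i)}"
  have "?S = {TA D, TB D'}"
  proof
    show "?S \<subseteq> {TA D, TB D'}"
    proof
      fix T assume "T \<in> ?S"
      then have ct: "coupled_tree (wheel_vertices v k) (wheel_edges v k) T" and vd: "\<forall>i\<in>{1..k}. val T (v i) = d i" by auto
      from ct obtain C where C: "C \<in> PP" "T = TA C \<or> T = TB C" using coupled_char by blast
      have Csub: "C \<subseteq> {1..k}" using C unfolding PP_def by auto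
      show "T \<in> {TA D, TB D'}"
      proof (cases "T = TA C")
        case True
        have "C = D"
        proof (rule set_eqI)
          fix i show "i \<in> C \<longleftrightarrow> i \<in> D"
          proof (cases "i \<in> {1..k}")
            case True
            then show ?thesis using vd val_TA[OF Csub True] \<open>T = TA C\<close> unfolding D_def by auto
          next
            case False then show ?thesis using Csub unfolding D_def by auto
          qed
        qed
        then show ?thesis using True by simp
      next
        case False
        then have TB: "T = TB C" using C by blast
        have "C = D'"
        proof (rule set_eqI)
          fix i show "i \<in> C \<longleftrightarrow> i \<in> D'"
          proof (cases "i \<in> {1..k}")
            case True
            then show ?thesis using vd val_TB[OF Csub nx_range[OF True]] TB nx_range[OF True] pv_nx[OF True]
              unfolding D'_def by auto
          next
            case False then show ?thesis using Csub unfolding D'_def by auto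
          qed
        qed
        then show ?thesis using TB by simp
      qed
    qed
  next
    have "TA D \<in> ?S"
    proof -
      have "val (TA D) (v i) = d i" if i: "i \<in> {1..k}" for i
      proof -
        have "d i = 1 \<or> d i = 2" using dv i by auto
        then show ?thesis using val_TA[OF DC(1) i] i unfolding D_def by auto
      qed
      then show ?thesis using TA_coupled DP unfolding PP_def by auto
    qed
    moreover have "TB D' \<in> ?S"
    proof -
      have "val (TB D') (v i) = d i" if i: "i \<in> {1..k}" for i
      proof -
        have "d i = 1 \<or> d i = 2" using dv i by auto
        then show ?thesis using val_TB[OF DC(2) i] nx_pv[OF i] pv_range[OF i] unfolding D'_def by auto
      qed
      then show ?thesis using TB_coupled D'P unfolding PP_def by auto
    qed
    ultimately show "{TA D, TB D'} \<subseteq> ?S" by blast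
  qed
  moreover have "TA D \<noteq> TB D'" using TA_TB_disj[OF DP D'P] .
  ultimately show ?thesis by simp
qed

end

theorem proposition3p3:
  fixes v :: "nat \<Rightarrow> 'a" and k :: nat and d :: "nat \<Rightarrow> nat"
  assumes "k \<ge> 3"
    and "inj_on v {0..k}"
    and "\<forall>i\<in>{1..k}. d i \<in> {1, 2}"
    and "\<exists>i\<in>{1..k}. \<exists>j\<in>{1..k}. d i \<noteq> d j"
  shows "card {T. coupled_tree (wheel_vertices v k) (wheel_edges v k) T \<and>
                  (\<forall>i\<in>{1..k}. val T (v i) = d i)} = 2 \<and>
         card {T. coupled_tree (wheel_vertices v k) (wheel_edges v k) T} = 2 ^ (k + 1) - 4"
proof -
  interpret wheel v k using assms(1,2) by unfold_locales
  show ?thesis using count_d[OF assms(3,4)] count_all by simp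
qed

end
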